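(* Under the standing assumptions of the context, suppose $\mathcal{C}_{\mathbb{R}}$ is in pseudo-generic position with respect to the $(x,y)$-plane. Let $i\in\{1,\dots,m\}$ and $(\alpha,\beta,\gamma)\in\mathcal{C}_{\mathbb{R}}$ with $\Delta_i(\alpha,\beta)=0$ and $\mathrm{sr}_{i,i}(\alpha,\beta)\neq0$. Then $$\gamma=-\frac{\mathrm{sr}_{i,i-1}(\alpha,\beta)}{i\,\mathrm{sr}_{i,i}(\alpha,\beta)}.$$
   Context: Subresultants: let $\mathbb{A}$ be an integral domain, $P=\sum_{i=0}^p a_iT^i$, $Q=\sum_{i=0}^q b_iT^i\in\mathbb{A}[T]$ with $a_pb_q\neq0$ and $p>q$. For $0\le k\le q$, let $M_k(P,Q)$ be the $(p+q-2k)\times(p+q-k)$ matrix whose rows are the coefficient vectors, in the basis $1,T,\dots,T^{p+q-k-1}$ (columns indexed $0,\dots,p+q-k-1$), of $P,TP,\dots,T^{q-k-1}P$ followed by $Q,TQ,\dots,T^{p-k-1}Q$. For $0\le j\le k$, $\mathrm{sr}_{k,j}$ is the determinant of the square matrix formed by column $j$ followed by the last $p+q-2k-1$ columns of $M_k(P,Q)$; $\mathrm{Sr}_k=\sum_{j=0}^k\mathrm{sr}_{k,j}T^j$ and $\mathrm{sr}_{k,k}$ is its principal coefficient; $\mathrm{Sr}_0=\mathrm{sr}_{0,0}$ is the resultant. Standing assumptions: $P_1,P_2\in\mathbb{Q}[X,Y,Z]$ with $\gcd(P_1,P_2)=1$, $\deg_Z P_\ell=\deg P_\ell$ for $\ell=1,2$,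 and $\deg_ZP_1>m:=\deg_ZP_2\ge1$. $\mathrm{Sr}_j(X,Y,Z)=\sum_{i=0}^j\mathrm{sr}_{j,i}(X,Y)Z^i$, $0\le j\le m$, are the subresultants of $P_1,P_2$ with respect to $Z$ over $\mathbb{Q}[X,Y]$. $h$ is the square-free part of $\mathrm{Res}_Z(P_1,P_2)$. $\Theta_0=h$, $\Theta_i=\gcd(\Theta_{i-1},\mathrm{sr}_{i,i})$, $\Delta_i=\Theta_{i-1}/\Theta_i$ for $i=1,\dots,m$. $\mathcal{C}_{\mathbb{C}}=\{(x,y,z)\in\mathbb{C}^3:P_1=P_2=0\}$, $\mathcal{C}_{\mathbb{R}}=\mathcal{C}_{\mathbb{C}}\cap\mathbb{R}^3$, $\Pi_z(x,y,z)=(x,y)$. Pseudo-generic position with respect to the $(x,y)$-plane: there is a finite set $F\subset\mathbb{C}^2$ such that every point of $\Pi_z(\mathcal{C}_{\mathbb{C}})\setminus F$ has exactly one preimage in $\mathcal{C}_{\mathbb{C}}$. *)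

theory Defs
  imports "HOL-Computational_Algebra.Computational_Algebra" "HOL-Computational_Algebra.Field_as_Ring" "Jordan_Normal_Form.Determinant"
begin

text \<open>Trivariate polynomials in Q[X,Y,Z] are represented as nested univariate
polynomials of type rat poly poly poly: the outermost variable is Z, then Y,
and the innermost variable is X. Hence Q[X,Y] is rat poly poly (outer Y, inner X).\<close>

text \<open>Entry (r,c) of the matrix M_k(P,Q): rows 0..q-k-1 are T^r P, rows
q-k .. p+q-2k-1 are T^s Q, columns indexed by the exponent of T.\<close>
definition sub_mat_entry :: "'a::comm_ring_1 poly \<Rightarrow> 'a poly \<Rightarrow> nat \<Rightarrow> nat \<Rightarrow> nat \<Rightarrow> 'a" where
  "sub_mat_entry P Q k r c =
     (if r < degree Q - k
      then (if r \<le> c then coeff P (c - r) else 0)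
      else (let s = r - (degree Q - k) in if s \<le> c then coeff Q (c - s) else 0))"

text \<open>sr_{k,j}(P,Q): determinant of column j followed by the last p+q-2k-1 columns
(columns k+1, ..., p+q-k-1) of M_k(P,Q).\<close>
definition sres_coeff :: "'a::comm_ring_1 poly \<Rightarrow> 'a poly \<Rightarrow> nat \<Rightarrow> nat \<Rightarrow> 'a" where
  "sres_coeff P Q k j =
     (let n = degree P + degree Q - 2 * k
      in det (mat n n (\<lambda>(r, c). sub_mat_entry P Q k r (if c = 0 then j else k + c))))"

definition total_degree3 :: "'a::zero poly poly poly \<Rightarrow> nat" where
  "total_degree3 P = Max (insert 0 {i + j + k | i j k. coeff (coeff (coeff P k) j) i \<noteq> 0})"

definition sqfree_part :: "'a::{factorial_semiring, normalization_semidom_multiplicative} \<Rightarrow> 'a" where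
  "sqfree_part p = (\<Prod>q\<in>prime_factors p. q)"

definition eval2 :: "rat poly poly \<Rightarrow> 'b::field_char_0 \<Rightarrow> 'b \<Rightarrow> 'b" where
  "eval2 p x y = poly (map_poly (\<lambda>c. poly (map_poly of_rat c) x) p) y"

definition eval3 :: "rat poly poly poly \<Rightarrow> 'b::field_char_0 \<Rightarrow> 'b \<Rightarrow> 'b \<Rightarrow> 'b" where
  "eval3 P x y z = poly (map_poly (\<lambda>c. eval2 c x y) P) z"

fun Theta :: "rat poly poly poly \<Rightarrow> rat poly poly poly \<Rightarrow> nat \<Rightarrow> rat poly poly" where
  "Theta P1 P2 0 = sqfree_part (sres_coeff P1 P2 0 0)"
| "Theta P1 P2 (Suc i) = gcd (Theta P1 P2 i) (sres_coeff P1 P2 (Suc i) (Suc i))"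

definition Delta :: "rat poly poly poly \<Rightarrow> rat poly poly poly \<Rightarrow> nat \<Rightarrow> rat poly poly" where
  "Delta P1 P2 i = Theta P1 P2 (i - 1) div Theta P1 P2 i"

definition curveC :: "rat poly poly poly \<Rightarrow> rat poly poly poly \<Rightarrow> (complex \<times> complex \<times> complex) set" where
  "curveC P1 P2 = {(x, y, z). eval3 P1 x y z = 0 \<and> eval3 P2 x y z = 0}"

definition curveR :: "rat poly poly poly \<Rightarrow> rat poly poly poly \<Rightarrow> (real \<times> real \<times> real) set" where
  "curveR P1 P2 = {(x, y, z). eval3 P1 x y z = 0 \<and> eval3 P2 x y z = 0}"

definition pseudo_generic :: "rat poly poly poly \<Rightarrow> rat poly poly poly \<Rightarrow> bool" where
  "pseudo_generic P1 P2 \<longleftrightarrow>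
     (\<exists>F :: (complex \<times> complex) set. finite F \<and>
        (\<forall>(x, y) \<in> (\<lambda>(x, y, z). (x, y)) ` curveC P1 P2 - F.
            \<exists>!z. (x, y, z) \<in> curveC P1 P2))"

end

theory Submission
  imports Defs "Jordan_Normal_Form.Char_Poly"
begin

lemma sum_lessThan_add_split: "(\<Sum>r<a+(b::nat). f r) = (\<Sum>r<a. f r) + (\<Sum>s<b. f (a+s))"
  by (induct b) (auto simp: add.assoc)

definition Rrow :: "'a::comm_ring_1 poly \<Rightarrow> 'a poly \<Rightarrow> nat \<Rightarrow> nat \<Rightarrow> 'a poly" where
  "Rrow P Q k r = (if r < degree Q - k then monom 1 r * P else monom 1 (r - (degree Q - k)) * Q)"

lemma sme_Rrow: "sub_mat_entry P Q k r c = coeff (Rrow P Q k r) c"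
  unfolding sub_mat_entry_def Rrow_def Let_def by (simp add: coeff_monom_mult)

definition Bm :: "'a::comm_ring_1 poly \<Rightarrow> 'a poly \<Rightarrow> nat \<Rightarrow> nat \<Rightarrow> 'a mat" where
  "Bm P Q k j = mat (degree P + degree Q - 2*k) (degree P + degree Q - 2*k)
     (\<lambda>(r, c). sub_mat_entry P Q k r (if c = 0 then j else k + c))"

lemma sres_Bm: "sres_coeff P Q k j = det (Bm P Q k j)"
  by (simp add: sres_coeff_def Bm_def Let_def)

lemma Bm_carrier: "Bm P Q k j \<in> carrier_mat (degree P + degree Q - 2*k) (degree P + degree Q - 2*k)"
  by (simp add: Bm_def)

lemma Bm_index: "r < degree P + degree Q - 2*k \<Longrightarrow> c < degree P + degree Q - 2*k \<Longrightarrow>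
   Bm P Q k j $$ (r,c) = coeff (Rrow P Q k r) (if c = 0 then j else k + c)"
  by (simp add: Bm_def sme_Rrow)

lemma degree_Rrow:
  assumes "k \<le> degree Q" "k \<le> degree P" "r < degree P + degree Q - 2*k"
  shows "degree (Rrow P Q k r) < degree P + degree Q - k"
proof (cases "r < degree Q - k")
  case True
  have "degree (monom (1::'a) r * P) \<le> r + degree P"
    by (metis add_le_mono1 degree_monom_le degree_mult_le order_trans)
  then show ?thesis using True assms unfolding Rrow_def by auto
next
  case False
  have "degree (monom (1::'a) (r - (degree Q - k)) * Q) \<le> (r - (degree Q - k)) + degree Q"
    by (metis add_le_mono1 degree_monom_le degree_mult_le order_trans)
  then show ?thesis using False assms unfolding Rrow_def by auto
qed

lemma coeff_Rrow_high:
  assumes "k \<le> degree Q" "k \<le> degree P" "r < degree P + degree Q - 2*k" "degree P + degree Q - k \<le> c"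
  shows "coeff (Rrow P Q k r) c = 0"
  using degree_Rrow[OF assms(1-3)] assms(4) by (intro coeff_eq_0) auto

lemma cof_indep: "cofactor (Bm P Q k j) r 0 = cofactor (Bm P Q k 0) r 0"
  unfolding cofactor_def
  by (rule arg_cong[where f="\<lambda>A. _ * det A"], rule eq_matI) (auto simp: mat_delete_def Bm_def)

lemma det_Bm_expand:
  assumes "0 < degree P + degree Q - 2*k"
  shows "det (Bm P Q k j) = (\<Sum>r<degree P + degree Q - 2*k.
            coeff (Rrow P Q k r) j * cofactor (Bm P Q k 0) r 0)"
  using laplace_expansion_column[OF Bm_carrier assms] 
  by (simp add: cof_indep[of P Q k j] Bm_index)

lemma det_Bm_dup:
  assumes "k < c" "c < degree P + degree Q - k"
  shows "det (Bm P Q k c) = 0"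
proof -
  let ?n = "degree P + degree Q - 2*k"
  show ?thesis
  proof (rule det_identical_columns[OF Bm_carrier, of 0 "c - k"])
    show "0 \<noteq> c - k" "0 < ?n" "c - k < ?n" using assms by auto
    show "col (Bm P Q k c) 0 = col (Bm P Q k c) (c - k)"
      using assms by (intro eq_vecI) (auto simp: Bm_def)
  qed
qed

definition Srp :: "'a::comm_ring_1 poly \<Rightarrow> 'a poly \<Rightarrow> nat \<Rightarrow> 'a poly" where
  "Srp P Q k = (\<Sum>j\<le>k. monom (sres_coeff P Q k j) j)"

lemma coeff_Srp: "coeff (Srp P Q k) c = (if c \<le> k then sres_coeff P Q k c else 0)"
  unfolding Srp_def by (simp add: coeff_sum coeff_monom)

lemma Sr_combo:
  assumes "k \<le> degree Q" "degree Q < degree P"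
  shows "Srp P Q k = (\<Sum>r<degree P + degree Q - 2*k.
            Polynomial.smult (cofactor (Bm P Q k 0) r 0) (Rrow P Q k r))"
proof (rule poly_eqI)
  fix c
  let ?n = "degree P + degree Q - 2*k"
  have n: "0 < ?n" using assms by auto
  have rhs: "coeff (\<Sum>r<?n. Polynomial.smult (cofactor (Bm P Q k 0) r 0) (Rrow P Q k r)) c
     = (\<Sum>r<?n. coeff (Rrow P Q k r) c * cofactor (Bm P Q k 0) r 0)"
    by (simp add: coeff_sum mult.commute)
  show "coeff (Srp P Q k) c = coeff (\<Sum>r<?n. Polynomial.smult (cofactor (Bm P Q k 0) r 0) (Rrow P Q k r)) c"
  proof (cases "c \<le> k")
    case True
    then show ?thesis unfolding rhs coeff_Srp det_Bm_expand[OF n, symmetric] sres_Bm by simp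
  next
    case False
    show ?thesis
    proof (cases "c < degree P + degree Q - k")
      case True
      then show ?thesis using False unfolding rhs coeff_Srp det_Bm_expand[OF n, symmetric]
        using det_Bm_dup[of k c P Q] by simp
    next
      case False2: False
      have "\<And>r. r < ?n \<Longrightarrow> coeff (Rrow P Q k r) c = 0"
        by (rule coeff_Rrow_high) (use assms False2 in auto)
      then show ?thesis using False unfolding rhs coeff_Srp by simp
    qed
  qed
qed

lemma combo_UV:
  assumes "k \<le> degree Q" "k \<le> degree P"
  shows "(\<Sum>r<degree P + degree Q - 2*k. Polynomial.smult (w r) (Rrow P Q k r))
     = (\<Sum>r<degree Q - k. monom (w r) r) * P + (\<Sum>s<degree P - k. monom (w (degree Q - k + s)) s) * Q"
proof -
  have n: "degree P + degree Q - 2*k = (degree Q - k) + (degree P - k)" using assms by auto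
  have sm: "Polynomial.smult a (monom 1 r * X) = monom a r * X" for a r and X :: "'a poly"
    by (subst mult_smult_left[symmetric]) (simp add: smult_monom)
  have s1: "(\<Sum>r<degree Q - k. Polynomial.smult (w r) (Rrow P Q k r)) = (\<Sum>r<degree Q - k. monom (w r) r) * P"
    unfolding sum_distrib_right by (rule sum.cong) (auto simp: Rrow_def sm)
  have s2: "(\<Sum>s<degree P - k. Polynomial.smult (w (degree Q - k + s)) (Rrow P Q k (degree Q - k + s)))
     = (\<Sum>s<degree P - k. monom (w (degree Q - k + s)) s) * Q"
    unfolding sum_distrib_right by (rule sum.cong) (auto simp: Rrow_def sm)
  show ?thesis unfolding n sum_lessThan_add_split s1 s2 ..
qed

lemma coeff_sum_monom: "coeff (\<Sum>s<m. monom (f s) s) c = (if c < m then f c else 0)"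
  by (simp add: coeff_sum coeff_monom)

lemma sum_monom_lessThan: assumes "degree U < m" shows "(\<Sum>r<m. monom (coeff U r) r) = U"
proof -
  obtain m' where m: "m = Suc m'" using assms by (cases m) auto
  show ?thesis unfolding m lessThan_Suc_atMost by (rule poly_as_sum_of_monoms') (use assms m in auto)
qed

lemma Bm_vec:
  assumes "w \<in> carrier_vec (degree P + degree Q - 2*k)" "c < degree P + degree Q - 2*k"
  shows "(transpose_mat (Bm P Q k j) *\<^sub>v w) $ c =
     coeff (\<Sum>r<degree P + degree Q - 2*k. Polynomial.smult (w$r) (Rrow P Q k r)) (if c = 0 then j else k + c)"
proof -
  let ?n = "degree P + degree Q - 2*k"
  have B: "Bm P Q k j \<in> carrier_mat ?n ?n" by (rule Bm_carrier)
  have "(transpose_mat (Bm P Q k j) *\<^sub>v w) $ c = row (transpose_mat (Bm P Q k j)) c \<bullet> w"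
    using assms B by (simp add: index_mult_mat_vec)
  also have "\<dots> = col (Bm P Q k j) c \<bullet> w" using assms B by (simp add: row_transpose)
  also have "\<dots> = (\<Sum>r\<in>{0..<?n}. col (Bm P Q k j) c $ r * w $ r)"
    using assms by (simp add: scalar_prod_def)
  also have "\<dots> = (\<Sum>r<?n. Bm P Q k j $$ (r,c) * w $ r)"
    unfolding lessThan_atLeast0 using assms B by (intro sum.cong refl) (simp add: index_col)
  also have "\<dots> = (\<Sum>r<?n. w $ r * coeff (Rrow P Q k r) (if c = 0 then j else k + c))"
    using assms by (intro sum.cong) (auto simp: Bm_index)
  finally show ?thesis by (simp add: coeff_sum)
qed

lemma det_zero_iff_w:
  fixes P Q :: "'a::field poly"
  shows "det (Bm P Q k j) = 0 \<longleftrightarrow> (\<exists>w\<in>carrier_vec (degree P + degree Q - 2*k).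
     w \<noteq> 0\<^sub>v (degree P + degree Q - 2*k) \<and> (\<forall>c<degree P + degree Q - 2*k.
     coeff (\<Sum>r<degree P + degree Q - 2*k. Polynomial.smult (vec_index w r) (Rrow P Q k r)) (if c = 0 then j else k + c) = 0))"
proof -
  let ?n = "degree P + degree Q - 2*k"
  let ?B = "Bm P Q k j"
  let ?T = "transpose_mat ?B"
  let ?C = "\<lambda>w. (\<forall>c<?n. coeff (\<Sum>r<?n. Polynomial.smult (vec_index w r) (Rrow P Q k r)) (if c = 0 then j else k + c) = 0)"
  have tc: "?T \<in> carrier_mat ?n ?n" using Bm_carrier by auto
  have d1: "det ?B = det ?T" by (rule det_transpose[OF Bm_carrier, symmetric])
  have d2: "det ?T = 0 \<longleftrightarrow> (\<exists>w. w \<in> carrier_vec ?n \<and> w \<noteq> 0\<^sub>v ?n \<and> ?T *\<^sub>v w = 0\<^sub>v ?n)"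
    by (rule det_0_iff_vec_prod_zero_field[OF tc])
  have eq: "(?T *\<^sub>v w = 0\<^sub>v ?n) \<longleftrightarrow> ?C w" if w: "w \<in> carrier_vec ?n" for w
  proof -
    have dim: "dim_vec (?T *\<^sub>v w) = ?n" using tc by simp
    have "(?T *\<^sub>v w = 0\<^sub>v ?n) \<longleftrightarrow> (\<forall>c<?n. vec_index (?T *\<^sub>v w) c = 0)"
    proof
      assume "?T *\<^sub>v w = 0\<^sub>v ?n" then show "\<forall>c<?n. vec_index (?T *\<^sub>v w) c = 0" by simp
    next
      assume "\<forall>c<?n. vec_index (?T *\<^sub>v w) c = 0"
      then show "?T *\<^sub>v w = 0\<^sub>v ?n" using dim by (intro eq_vecI) (simp_all add: Bm_def)
    qed
    also have "\<dots> \<longleftrightarrow> ?C w" using Bm_vec[OF w] by simp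
    finally show ?thesis .
  qed
  show ?thesis
  proof
    assume "det ?B = 0"
    then obtain w where w: "w \<in> carrier_vec ?n" "w \<noteq> 0\<^sub>v ?n" "?T *\<^sub>v w = 0\<^sub>v ?n" using d1 d2 by auto
    have "?C w" using eq[OF w(1)] w(3) by simp
    then show "\<exists>w\<in>carrier_vec ?n. w \<noteq> 0\<^sub>v ?n \<and> ?C w" using w by blast
  next
    assume "\<exists>w\<in>carrier_vec ?n. w \<noteq> 0\<^sub>v ?n \<and> ?C w"
    then obtain w where w: "w \<in> carrier_vec ?n" "w \<noteq> 0\<^sub>v ?n" "?C w" by blast
    have "?T *\<^sub>v w = 0\<^sub>v ?n" using eq[OF w(1)] w(3) by simp
    then show "det ?B = 0" using d1 d2 w by auto
  qed
qed

lemma lead_coeff_gcd_field: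
  fixes P Q :: "complex poly"
  assumes "P \<noteq> 0"
  shows "lead_coeff (gcd P Q) = 1"
proof -
  have "unit_factor (gcd P Q) = 1" using assms by (simp add: unit_factor_gcd)
  moreover have "gcd P Q \<noteq> 0" using assms by simp
  ultimately show ?thesis by (simp add: unit_factor_poly_def one_pCons)
qed

lemma T1:
  fixes P Q :: "complex poly"
  assumes P: "P \<noteq> 0" and Q: "Q \<noteq> 0" and kd: "k < degree (gcd P Q)" and qp: "degree Q < degree P"
  shows "sres_coeff P Q k j = 0"
proof -
  define G where "G = gcd P Q"
  define d where "d = degree G"
  define P' where "P' = P div G"
  define Q' where "Q' = Q div G"
  let ?p = "degree P" and ?q = "degree Q"
  let ?n = "?p + ?q - 2*k"
  have G0: "G \<noteq> 0" using P unfolding G_def by simp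
  have PG: "P = P' * G" unfolding P'_def G_def by simp
  have QG: "Q = Q' * G" unfolding Q'_def G_def by simp
  have P'0: "P' \<noteq> 0" using P PG by auto
  have Q'0: "Q' \<noteq> 0" using Q QG by auto
  have dp: "?p = degree P' + d" using PG P'0 G0 d_def by (simp add: degree_mult_eq)
  have dq: "?q = degree Q' + d" using QG Q'0 G0 d_def by (simp add: degree_mult_eq)
  have kd': "k < d" using kd unfolding d_def G_def .
  define f where "f r = (if r < ?q - k then coeff Q' r else coeff (- P') (r - (?q - k)))" for r
  define w where "w = vec ?n f"
  have w: "w \<in> carrier_vec ?n" unfolding w_def by simp
  have sumw: "(\<Sum>r<?n. Polynomial.smult (w$r) (Rrow P Q k r)) = (\<Sum>r<?n. Polynomial.smult (f r) (Rrow P Q k r))"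
    unfolding w_def by (intro sum.cong) auto
  have U: "(\<Sum>r<?q - k. monom (f r) r) = Q'"
  proof -
    have "(\<Sum>r<?q - k. monom (f r) r) = (\<Sum>r<?q - k. monom (coeff Q' r) r)"
      by (intro sum.cong) (auto simp: f_def)
    also have "\<dots> = Q'" by (rule sum_monom_lessThan) (use dq kd' in linarith)
    finally show ?thesis .
  qed
  have V: "(\<Sum>s<?p - k. monom (f (?q - k + s)) s) = - P'"
  proof -
    have "(\<Sum>s<?p - k. monom (f (?q - k + s)) s) = (\<Sum>r<?p - k. monom (coeff (- P') r) r)"
      by (intro sum.cong) (auto simp: f_def)
    also have "\<dots> = - P'" by (rule sum_monom_lessThan) (use dp kd' in simp)
    finally show ?thesis .
  qed
  have cmb: "(\<Sum>r<?n. Polynomial.smult (f r) (Rrow P Q k r)) =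
     (\<Sum>r<?q - k. monom (f r) r) * P + (\<Sum>s<?p - k. monom (f (?q - k + s)) s) * Q"
    by (rule combo_UV) (use dq dp kd' in auto)
  have zero: "(\<Sum>r<?n. Polynomial.smult (w$r) (Rrow P Q k r)) = 0"
    proof -
    have "Q' * P + - P' * Q = Q' * (P' * G) - P' * (Q' * G)" using PG QG by simp
    also have "\<dots> = 0" by (simp add: algebra_simps)
    finally show ?thesis unfolding sumw cmb U V .
  qed
  have idx: "?q - k + (?p - d) < ?n" using dp dq kd' by auto
  have "w $ (?q - k + (?p - d)) = - lead_coeff P'"
    unfolding w_def using idx dp by (simp add: f_def)
  moreover have "lead_coeff P' \<noteq> 0" using P'0 by simp
  ultimately have "w \<noteq> 0\<^sub>v ?n" using idx by (metis index_zero_vec(1) neg_equal_0_iff_equal)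
  then show ?thesis unfolding sres_Bm det_zero_iff_w using w zero by auto
qed

lemma T2:
  fixes P Q :: "complex poly"
  assumes P: "P \<noteq> 0" and Q: "Q \<noteq> 0" and qp: "degree Q < degree P"
  shows "sres_coeff P Q (degree (gcd P Q)) (degree (gcd P Q)) \<noteq> 0"
proof
  define G where "G = gcd P Q"
  define d where "d = degree G"
  define P' where "P' = P div G"
  define Q' where "Q' = Q div G"
  let ?p = "degree P" and ?q = "degree Q"
  let ?n = "?p + ?q - 2*d"
  assume "sres_coeff P Q (degree (gcd P Q)) (degree (gcd P Q)) = 0"
  then obtain w where w: "w \<in> carrier_vec ?n" "w \<noteq> 0\<^sub>v ?n"
    and cz: "\<And>c. c < ?n \<Longrightarrow> coeff (\<Sum>r<?n. Polynomial.smult (vec_index w r) (Rrow P Q d r)) (if c = 0 then d else d + c) = 0"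
    unfolding sres_Bm det_zero_iff_w d_def G_def by blast
  have G0: "G \<noteq> 0" using P unfolding G_def by simp
  have PG: "P = P' * G" unfolding P'_def G_def by simp
  have QG: "Q = Q' * G" unfolding Q'_def G_def by simp
  have P'0: "P' \<noteq> 0" using P PG by auto
  have Q'0: "Q' \<noteq> 0" using Q QG by auto
  have dp: "?p = degree P' + d" using PG P'0 G0 d_def by (simp add: degree_mult_eq)
  have dq: "?q = degree Q' + d" using QG Q'0 G0 d_def by (simp add: degree_mult_eq)
  define W where "W = (\<Sum>r<?n. Polynomial.smult (vec_index w r) (Rrow P Q d r))"
  define U where "U = (\<Sum>r<?q - d. monom (vec_index w r) r)"
  define V where "V = (\<Sum>s<?p - d. monom (vec_index w (?q - d + s)) s)"
  have WUV: "W = U * P + V * Q" unfolding W_def U_def V_def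
    by (rule combo_UV) (use dq dp in auto)
  have Whigh: "coeff W c = 0" if "d \<le> c" for c
  proof (cases "c < ?p + ?q - d")
    case True
    show ?thesis
    proof (cases "c = d")
      case True
      then show ?thesis using cz[of 0] qp dq unfolding W_def by simp
    next
      case False
      then show ?thesis using cz[of "c - d"] qp that True unfolding W_def by simp
    qed
  next
    case False
    have "\<And>r. r < ?n \<Longrightarrow> coeff (Rrow P Q d r) c = 0"
      by (rule coeff_Rrow_high) (use dq dp False in auto)
    then show ?thesis unfolding W_def by (simp add: coeff_sum)
  qed
  have GW: "G dvd W" unfolding WUV G_def by simp
  have W0: "W = 0"
  proof (rule ccontr)
    assume W0: "W \<noteq> 0"
    then have "d \<le> degree W" using dvd_imp_degree_le[OF GW W0] d_def by simp
    moreover have "coeff W (degree W) \<noteq> 0" using W0 by simp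
    ultimately show False using Whigh by blast
  qed
  have "U * P' * G = - (V * Q' * G)" using WUV W0 PG QG by (simp add: algebra_simps eq_neg_iff_add_eq_0)
  then have UV: "U * P' = - (V * Q')" using G0 by (metis minus_mult_left mult_right_cancel)
  have cop: "coprime P' Q'" unfolding P'_def Q'_def G_def by (rule div_gcd_coprime) (use P in auto)
  have "P' dvd V * Q'" by (metis UV dvd_minus_iff dvd_triv_right mult.commute)
  then have PV: "P' dvd V" using cop by (simp add: coprime_dvd_mult_left_iff)
  have V0: "V = 0"
  proof (rule ccontr)
    assume V0: "V \<noteq> 0"
    have "degree P' \<le> degree V" using dvd_imp_degree_le[OF PV V0] .
    moreover have "coeff V (degree V) \<noteq> 0" using V0 by simp
    moreover have "coeff V c = 0" if "degree P' \<le> c" for c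
      unfolding V_def coeff_sum_monom using that dp by simp
    ultimately show False by blast
  qed
  have U0: "U = 0" using WUV W0 V0 P by simp
  have "w = 0\<^sub>v ?n"
  proof (rule eq_vecI)
    show "dim_vec w = dim_vec (0\<^sub>v ?n)" using w by simp
    fix r assume "r < dim_vec (0\<^sub>v ?n)"
    then have r: "r < ?n" by simp
    show "vec_index w r = vec_index (0\<^sub>v ?n) r"
    proof (cases "r < ?q - d")
      case True
      have "coeff U r = vec_index w r" unfolding U_def coeff_sum_monom using True by simp
      then show ?thesis using U0 r by simp
    next
      case False
      have "coeff V (r - (?q - d)) = vec_index w r" unfolding V_def coeff_sum_monom using False r dq dp by auto
      then show ?thesis using V0 r by simp
    qed
  qed
  then show False using w by simp
qed

lemma SUB_MAIN:
  fixes P Q :: "complex poly"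
  assumes P: "P \<noteq> 0" and Q: "Q \<noteq> 0" and qp: "degree Q < degree P"
    and iq: "i \<le> degree Q"
    and low: "\<And>j. j < i \<Longrightarrow> sres_coeff P Q j j = 0"
    and si: "sres_coeff P Q i i \<noteq> 0"
  shows "degree (gcd P Q) = i \<and> Srp P Q i = Polynomial.smult (sres_coeff P Q i i) (gcd P Q)"
proof -
  define G where "G = gcd P Q"
  have d: "degree G = i"
  proof -
    have "\<not> degree G < i" using T2[OF P Q qp] low unfolding G_def by auto
    moreover have "\<not> i < degree G" using T1[OF P Q _ qp, of i i] si unfolding G_def by auto
    ultimately show ?thesis by simp
  qed
  have "G dvd Srp P Q i"
    unfolding Sr_combo[OF iq qp]
    by (intro dvd_sum dvd_smult) (auto simp: Rrow_def G_def)
  then obtain t where t: "Srp P Q i = G * t" by (elim dvdE)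
  have G0: "G \<noteq> 0" using P G_def by simp
  have lc: "lead_coeff G = 1" unfolding G_def by (rule lead_coeff_gcd_field[OF P])
  have "coeff (Srp P Q i) i \<noteq> 0" using si by (simp add: coeff_Srp)
  then have S0: "Srp P Q i \<noteq> 0" by auto
  have "degree (Srp P Q i) \<le> i" by (rule degree_le) (auto simp: coeff_Srp)
  then have "degree t = 0" using t S0 d by (auto simp: degree_mult_eq)
  then obtain c where tc: "t = [:c:]" by (metis degree_eq_zeroE)
  have "coeff (Srp P Q i) i = c" using t tc d lc by simp
  then have "c = sres_coeff P Q i i" by (simp add: coeff_Srp)
  then show ?thesis using t tc d G_def by simp
qed

definition evC :: "complex poly poly \<Rightarrow> complex \<Rightarrow> complex \<Rightarrow> complex" where
  "evC f x y = poly (map_poly (\<lambda>c. poly c x) f) y"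

lemma evC_hom: "comm_ring_hom (\<lambda>f. evC f x y)"
proof -
  interpret m: map_poly_comm_ring_hom "\<lambda>c. poly c x" ..
  show ?thesis by unfold_locales (auto simp: evC_def m.hom_mult m.hom_add)
qed

lemma evC_mult[simp]: "evC (f * g) x y = evC f x y * evC g x y"
proof -
  interpret m: map_poly_comm_ring_hom "\<lambda>c. poly c x" ..
  show ?thesis by (simp add: evC_def m.hom_mult)
qed
lemma evC_add[simp]: "evC (f + g) x y = evC f x y + evC g x y"
proof -
  interpret m: map_poly_comm_ring_hom "\<lambda>c. poly c x" ..
  show ?thesis by (simp add: evC_def m.hom_add)
qed
lemma evC_one[simp]: "evC 1 x y = 1"
  by (simp add: evC_def)
lemma evC_const[simp]: "evC [:c:] x y = poly c x"
proof -
  interpret m: map_poly_comm_ring_hom "\<lambda>c. poly c x" ..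
  have "map_poly (\<lambda>c. poly c x) [:c:] = [:poly c x:]"
    by (rule poly_eqI) (simp add: coeff_map_poly coeff_pCons split: nat.split)
  then show ?thesis by (simp add: evC_def)
qed
lemma evC_smult[simp]: "evC (Polynomial.smult c f) x y = poly c x * evC f x y"
proof -
  have e: "Polynomial.smult c f = [:c:] * f" by simp
  show ?thesis by (subst e) (simp only: evC_mult evC_const)
qed

lemma evC_prod_mset: "evC (prod_mset M) x y = prod_mset (image_mset (\<lambda>g. evC g x y) M)"
  by (induct M) auto

lemma evC_dvd: "g dvd f \<Longrightarrow> evC g x y = 0 \<Longrightarrow> evC f x y = 0"
  by (elim dvdE) simp

lemma prime_factor_vanish:
  assumes "f \<noteq> 0" "evC f a b = 0"
  shows "\<exists>g. prime g \<and> g dvd f \<and> evC g a b = 0"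
proof -
  have "f dvd prod_mset (prime_factorization f)"
    using prod_mset_prime_factorization_weak[OF assms(1)]
    by (metis dvd_normalize_iff dvd_refl normalize_dvd_iff)
  then have "evC (prod_mset (prime_factorization f)) a b = 0" using assms(2) evC_dvd by blast
  then have "prod_mset (image_mset (\<lambda>g. evC g a b) (prime_factorization f)) = 0"
    by (simp add: evC_prod_mset)
  then obtain g where "g \<in># prime_factorization f" "evC g a b = 0" by (auto simp: prod_mset_zero_iff)
  then show ?thesis using in_prime_factors_imp_prime in_prime_factors_imp_dvd by blast
qed


lemma map_zero_dvd:
  fixes g :: "complex poly poly"
  assumes "map_poly (\<lambda>c. poly c x0) g = 0"
  shows "[:[:-x0,1:]:] dvd g"
  unfolding const_poly_dvd_iff
proof
  fix n
  have "poly (coeff g n) x0 = coeff (map_poly (\<lambda>c. poly c x0) g) n" by (simp add: coeff_map_poly)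
  then have "poly (coeff g n) x0 = 0" using assms by simp
  then show "[:-x0,1:] dvd coeff g n" by (rule iffD1[OF poly_eq_0_iff_dvd])
qed

lemma lin_not_unit: "\<not> is_unit ([:[:-x0,1:]:] :: complex poly poly)"
  by (simp add: is_unit_poly_iff)

lemma prime_irred: "prime (g::complex poly poly) \<Longrightarrow> irreducible g"
  by (simp add: prime_elem_imp_irreducible)

lemma prime_lin_dvd:
  assumes g: "prime (g::complex poly poly)" and d: "[:[:-x0,1:]:] dvd g"
  shows "g dvd [:[:-x0,1:]:] \<and> degree g = 0"
proof -
  obtain r where r: "g = [:[:-x0,1:]:] * r" using d by (elim dvdE)
  have "is_unit [:[:-x0,1:]:] \<or> is_unit r" using prime_irred[OF g] r by (metis irreducibleD)
  then have u: "is_unit r" using lin_not_unit by blast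
  have "g dvd [:[:-x0,1:]:]" using u r by (metis dvd_mult_unit_iff dvd_refl)
  moreover have "degree r = 0" using u by (auto simp: is_unit_poly_iff)
  moreover have "r \<noteq> 0" using u by auto
  ultimately show ?thesis using r by (simp add: degree_mult_eq)
qed

lemma complex_root_exists: assumes "degree (p::complex poly) \<noteq> 0" shows "\<exists>z. poly p z = 0"
proof -
  have "\<not> constant (poly p)" using assms by (simp add: constant_degree)
  then show ?thesis using fundamental_theorem_of_algebra by blast
qed

lemma INF:
  assumes g: "prime (g::complex poly poly)"
  shows "infinite {(x,y). evC g x y = 0}"
proof (cases "degree g = 0")
  case True
  then obtain c where gc: "g = [:c:]" by (metis degree_eq_zeroE)
  have nu: "\<not> is_unit g" using prime_irred[OF g] irreducible_not_unit by blast
  have g0: "g \<noteq> 0" using g by auto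
  have "degree c \<noteq> 0"
  proof
    assume "degree c = 0"
    then obtain e where "c = [:e:]" by (metis degree_eq_zeroE)
    then show False using nu g0 gc by (auto simp: is_unit_poly_iff)
  qed
  then obtain x0 where x0: "poly c x0 = 0" using complex_root_exists by blast
  have sub: "range (\<lambda>y. (x0,y)) \<subseteq> {(x,y). evC g x y = 0}" using x0 gc by auto
  have "infinite (range (\<lambda>y::complex. (x0,y)))"
  proof
    assume "finite (range (\<lambda>y::complex. (x0,y)))"
    moreover have "inj (\<lambda>y::complex. (x0,y))" by (auto simp: inj_def)
    ultimately have "finite (UNIV :: complex set)" by (rule finite_imageD)
    then show False using infinite_UNIV_char_0 by blast
  qed
  then show ?thesis using sub infinite_super by blast
next
  case False
  have g0: "g \<noteq> 0" using g by auto
  let ?lc = "lead_coeff g"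
  have lc0: "?lc \<noteq> 0" using g0 by simp
  have fin: "finite {x. poly ?lc x = 0}" using poly_roots_finite[OF lc0] .
  have sub: "UNIV - {x. poly ?lc x = 0} \<subseteq> fst ` {(x,y). evC g x y = 0}"
  proof
    fix x assume "x \<in> UNIV - {x. poly ?lc x = 0}"
    then have "poly ?lc x \<noteq> 0" by simp
    then have "degree (map_poly (\<lambda>c. poly c x) g) = degree g" by (intro map_poly_degree_eq) simp
    then obtain y where "poly (map_poly (\<lambda>c. poly c x) g) y = 0" using False complex_root_exists by metis
    then have "(x,y) \<in> {(x,y). evC g x y = 0}" by (simp add: evC_def)
    then show "x \<in> fst ` {(x,y). evC g x y = 0}" by force
  qed
  show ?thesis
  proof
    assume "finite {(x,y). evC g x y = 0}"
    then have "finite (UNIV - {x. poly ?lc x = 0})" using sub finite_subset by blast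
    then have "finite (UNIV :: complex set)" using fin by (metis Diff_infinite_finite)
    then show False using infinite_UNIV_char_0 by blast
  qed
qed


lemma fin_fibres:
  assumes "finite X" "\<And>x0. x0 \<in> X \<Longrightarrow> map_poly (\<lambda>c. poly c x0) g \<noteq> 0"
  shows "finite (\<Union>x0\<in>X. {x0} \<times> {y. evC g x0 y = 0})"
  using assms by (auto intro!: finite_UN_I poly_roots_finite simp: evC_def)

lemma BEZ:
  fixes g K :: "complex poly poly"
  assumes g: "prime g" and dg: "degree g \<noteq> 0" and nd: "\<not> g dvd K"
  shows "\<exists>u v e. u * g + v * K = [:e:] \<and> e \<noteq> 0"
proof -
  define I where "I = {x. \<exists>u v. x = u * g + v * K}"
  have gI: "g \<in> I" unfolding I_def by (rule CollectI, rule exI[of _ 1], rule exI[of _ 0]) simp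
  have g0: "g \<noteq> 0" using g by auto
  have KI: "K \<in> I" unfolding I_def by (rule CollectI, rule exI[of _ 0], rule exI[of _ 1]) simp
  define n where "n = (LEAST n. \<exists>h\<in>I. h \<noteq> 0 \<and> degree h = n)"
  have ex: "\<exists>h\<in>I. h \<noteq> 0 \<and> degree h = degree g" using gI g0 by blast
  obtain h where h: "h \<in> I" "h \<noteq> 0" "degree h = n"
    using LeastI_ex[of "\<lambda>n. \<exists>h\<in>I. h \<noteq> 0 \<and> degree h = n"] ex unfolding n_def by blast
  have minimal: "\<And>r. r \<in> I \<Longrightarrow> r \<noteq> 0 \<Longrightarrow> n \<le> degree r"
    unfolding n_def by (rule Least_le) blast
  obtain u v where huv: "h = u * g + v * K" using h(1) unfolding I_def by blast
  have reduce: "\<exists>c. c \<noteq> 0 \<and> h dvd Polynomial.smult c F" if FI: "F \<in> I" for F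
  proof -
    obtain q r where qr: "pseudo_divmod F h = (q, r)" by force
    define c where "c = coeff h (degree h) ^ (Suc (degree F) - degree h)"
    have eq: "Polynomial.smult c F = h * q + r" using pseudo_divmod(1)[OF h(2) qr] unfolding c_def .
    have rr: "r = 0 \<or> degree r < degree h" using pseudo_divmod(2)[OF h(2) qr] .
    have c0: "c \<noteq> 0" using h(2) unfolding c_def by simp
    obtain u1 v1 where F: "F = u1 * g + v1 * K" using FI unfolding I_def by blast
    have "r = Polynomial.smult c F - h * q" using eq by simp
    also have "\<dots> = ([:c:] * u1 - u * q) * g + ([:c:] * v1 - v * q) * K"
      unfolding F huv by (simp add: algebra_simps smult_add_right)
    finally have rI: "r \<in> I" unfolding I_def by blast
    have r0: "r = 0"
    proof (rule ccontr)
      assume "r \<noteq> 0"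
      then have "n \<le> degree r" by (rule minimal[OF rI])
      with rr h(3) \<open>r \<noteq> 0\<close> show False by auto
    qed
    have "Polynomial.smult c F = h * q" using eq r0 by simp
    then have "h dvd Polynomial.smult c F" by (rule dvdI)
    then show ?thesis using c0 by blast
  qed
  have dh: "degree h = 0"
  proof (rule ccontr)
    assume dh: "degree h \<noteq> 0"
    obtain c where c: "c \<noteq> 0" "h dvd Polynomial.smult c g" using reduce[OF gI] by blast
    then obtain q where q: "Polynomial.smult c g = h * q" by (elim dvdE)
    have "h * q = [:c:] * g" using q by simp
    then have "g dvd h * q" by (metis dvd_triv_right)
    then have "g dvd h \<or> g dvd q" by (rule prime_dvd_multD[OF g])
    then show False
    proof
      assume "g dvd q"
      then obtain t where t: "q = g * t" by (elim dvdE)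
      have "[:c:] * g = (h * t) * g" using q t by (simp add: algebra_simps)
      then have "[:c:] = h * t" using g0 by (metis mult_right_cancel)
      moreover have t0: "t \<noteq> 0" using c calculation by auto
      moreover have "degree (h * t) = degree h + degree t" by (rule degree_mult_eq) (use h(2) t0 in auto)
      ultimately show False using dh by (metis add_eq_0_iff_both_eq_0 degree_pCons_0)
    next
      assume gh: "g dvd h"
      obtain c' where c': "c' \<noteq> 0" "h dvd Polynomial.smult c' K" using reduce[OF KI] by blast
      moreover have "Polynomial.smult c' K = [:c':] * K" by simp
      ultimately have "g dvd [:c':] * K" using gh by (metis dvd_trans)
      then have "g dvd [:c':] \<or> g dvd K" by (rule prime_dvd_multD[OF g])
      then show False
      proof
        assume "g dvd [:c':]"
        then have "degree g \<le> degree [:c':]" using c' by (intro dvd_imp_degree_le) auto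
        then show False using dg by simp
      qed (use nd in blast)
    qed
  qed
  then obtain e where "h = [:e:]" by (metis degree_eq_zeroE)
  then show ?thesis using huv h(2) by auto
qed

lemma FIN:
  assumes g: "prime (g::complex poly poly)" and nd: "\<not> g dvd K"
  shows "finite {(x,y). evC g x y = 0 \<and> evC K x y = 0}"
proof (cases "degree g = 0")
  case True
  then obtain c where gc: "g = [:c:]" by (metis degree_eq_zeroE)
  have c0: "c \<noteq> 0" using g gc by auto
  have sub: "{(x,y). evC g x y = 0 \<and> evC K x y = 0} \<subseteq> (\<Union>x0\<in>{x. poly c x = 0}. {x0} \<times> {y. evC K x0 y = 0})"
    using gc by auto
  have "finite (\<Union>x0\<in>{x. poly c x = 0}. {x0} \<times> {y. evC K x0 y = 0})"
  proof (rule fin_fibres)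
    show "finite {x. poly c x = 0}" using poly_roots_finite[OF c0] .
    fix x0 assume "x0 \<in> {x. poly c x = 0}"
    then have "[:-x0,1:] dvd c" by (simp add: dvd_iff_poly_eq_0)
    then have "[:[:-x0,1:]:] dvd g" using gc by (simp add: const_poly_dvd_const_poly_iff)
    then have gL: "g dvd [:[:-x0,1:]:]" by (rule conjunct1[OF prime_lin_dvd[OF g]])
    show "map_poly (\<lambda>c. poly c x0) K \<noteq> 0"
    proof
      assume "map_poly (\<lambda>c. poly c x0) K = 0"
      then have "[:[:-x0,1:]:] dvd K" by (rule map_zero_dvd)
      from dvd_trans[OF gL this] nd show False by simp
    qed
  qed
  then show ?thesis using sub finite_subset by blast
next
  case False
  obtain u v e where E: "u * g + v * K = [:e:]" and e0: "e \<noteq> 0"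
    using BEZ[OF g False nd] by blast
  have sub: "{(x,y). evC g x y = 0 \<and> evC K x y = 0} \<subseteq> (\<Union>x0\<in>{x. poly e x = 0}. {x0} \<times> {y. evC g x0 y = 0})"
  proof (clarsimp)
    fix x y assume "evC g x y = 0" "evC K x y = 0"
    then have "evC (u * g + v * K) x y = 0" by simp
    then show "poly e x = 0" unfolding E by simp
  qed
  have "finite (\<Union>x0\<in>{x. poly e x = 0}. {x0} \<times> {y. evC g x0 y = 0})"
  proof (rule fin_fibres)
    show "finite {x. poly e x = 0}" using poly_roots_finite[OF e0] .
    fix x0
    show "map_poly (\<lambda>c. poly c x0) g \<noteq> 0"
    proof
      assume "map_poly (\<lambda>c. poly c x0) g = 0"
      then have "[:[:-x0,1:]:] dvd g" by (rule map_zero_dvd)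
      from conjunct2[OF prime_lin_dvd[OF g this]] False show False by simp
    qed
  qed
  then show ?thesis using sub finite_subset by blast
qed

lemma GEO:
  assumes f0: "f \<noteq> 0" and fa: "evC f a b = 0" and Ka: "evC K a b \<noteq> 0"
  shows "infinite {(x,y). evC f x y = 0 \<and> evC K x y \<noteq> 0}"
proof -
  obtain g where g: "prime g" "g dvd f" "evC g a b = 0" using prime_factor_vanish[OF f0 fa] by blast
  have nd: "\<not> g dvd K" using g(3) Ka evC_dvd by blast
  have "infinite ({(x,y). evC g x y = 0} - {(x,y). evC g x y = 0 \<and> evC K x y = 0})"
    using INF[OF g(1)] FIN[OF g(1) nd] by (rule Diff_infinite_finite[rotated])
  moreover have "{(x,y). evC g x y = 0} - {(x,y). evC g x y = 0 \<and> evC K x y = 0}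
     \<subseteq> {(x,y). evC f x y = 0 \<and> evC K x y \<noteq> 0}"
    using g(2) evC_dvd by auto
  ultimately show ?thesis using infinite_super by blast
qed

lemma eval2_hom: "comm_ring_hom (\<lambda>p. eval2 p x (y::'b::field_char_0))"
proof -
  interpret h1: map_poly_comm_ring_hom "of_rat :: rat \<Rightarrow> 'b" ..
  interpret h2: comm_ring_hom "\<lambda>c. poly (map_poly (of_rat :: rat \<Rightarrow> 'b) c) x"
    by unfold_locales (simp_all add: h1.hom_mult h1.hom_add)
  interpret h3: map_poly_comm_ring_hom "\<lambda>c. poly (map_poly (of_rat :: rat \<Rightarrow> 'b) c) x" ..
  show ?thesis by unfold_locales (simp_all add: eval2_def h3.hom_mult h3.hom_add)
qed

lemma eval2_evC: "eval2 p x y = evC (map_poly (map_poly of_rat) p) x y"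
  unfolding eval2_def evC_def by (subst map_poly_map_poly) (auto simp: o_def)

lemma of_real_of_rat_c: "(of_real (of_rat r :: real) :: complex) = of_rat r"
  by (cases r) (simp add: of_rat_rat)

lemma eval2_of_real: "eval2 p (of_real x) (of_real y) = (of_real (eval2 p x y) :: complex)"
proof -
  have in1: "poly (map_poly (of_rat :: rat \<Rightarrow> complex) c) (of_real x) = of_real (poly (map_poly of_rat c) x)" for c
  proof -
    have "of_real (poly (map_poly of_rat c) x) = poly (map_poly of_real (map_poly (of_rat :: rat \<Rightarrow> real) c)) (of_real x :: complex)"
      by (rule of_real_hom.poly_map_poly[symmetric])
    also have "map_poly of_real (map_poly (of_rat :: rat \<Rightarrow> real) c) = map_poly (of_rat :: rat \<Rightarrow> complex) c"
      by (subst map_poly_map_poly) (auto simp: o_def of_real_of_rat_c)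
    finally show ?thesis by simp
  qed
  have "of_real (eval2 p x y) = poly (map_poly of_real (map_poly (\<lambda>c. poly (map_poly of_rat c) x) p)) (of_real y :: complex)"
    unfolding eval2_def by (rule of_real_hom.poly_map_poly[symmetric])
  also have "map_poly of_real (map_poly (\<lambda>c. poly (map_poly (of_rat :: rat \<Rightarrow> real) c) x) p)
     = map_poly (\<lambda>c. poly (map_poly (of_rat :: rat \<Rightarrow> complex) c) (of_real x)) p"
    by (subst map_poly_map_poly) (auto simp: o_def in1)
  finally show ?thesis unfolding eval2_def by simp
qed

lemma sres_hom:
  assumes h: "comm_ring_hom h" and dP: "degree (map_poly h P) = degree P" and dQ: "degree (map_poly h Q) = degree Q"
  shows "h (sres_coeff P Q k j) = sres_coeff (map_poly h P) (map_poly h Q) k j"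
proof -
  interpret comm_ring_hom h by (rule h)
  have "Bm (map_poly h P) (map_poly h Q) k j = map_mat h (Bm P Q k j)"
    by (rule eq_matI) (auto simp: Bm_def sub_mat_entry_def Let_def dP dQ coeff_map_poly)
  then show ?thesis unfolding sres_Bm by simp
qed

lemma Srp_hom:
  assumes h: "comm_ring_hom h" and dP: "degree (map_poly h P) = degree P" and dQ: "degree (map_poly h Q) = degree Q"
  shows "map_poly h (Srp P Q k) = Srp (map_poly h P) (map_poly h Q) k"
proof -
  interpret comm_ring_hom h by (rule h)
  show ?thesis by (rule poly_eqI) (simp add: coeff_map_poly coeff_Srp sres_hom[OF h dP dQ])
qed

lemma ev_dvd_zero: "a dvd b \<Longrightarrow> eval2 a x y = 0 \<Longrightarrow> eval2 b x (y::'b::field_char_0) = 0"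
proof -
  interpret e: comm_ring_hom "\<lambda>p. eval2 p x y" by (rule eval2_hom)
  show "a dvd b \<Longrightarrow> eval2 a x y = 0 \<Longrightarrow> eval2 b x y = 0" by (elim dvdE) (simp add: e.hom_mult)
qed

lemma Theta_nz: "Theta P1 P2 j \<noteq> 0"
proof (induct j)
  case 0
  have "\<forall>q\<in>prime_factors (sres_coeff P1 P2 0 0). q \<noteq> 0"
    using in_prime_factors_imp_prime not_prime_0 by blast
  then have "(\<Prod>q\<in>prime_factors (sres_coeff P1 P2 0 0). q) \<noteq> 0"
    by (subst prod_zero_iff) auto
  then show ?case by (simp add: sqfree_part_def)
next
  case (Suc j)
  then show ?case by simp
qed

lemma Theta_dvd: "j \<le> i \<Longrightarrow> Theta P1 P2 i dvd Theta P1 P2 j"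
proof (induct i)
  case 0 then show ?case by simp
next
  case (Suc i)
  show ?case
  proof (cases "j = Suc i")
    case False
    then have "Theta P1 P2 i dvd Theta P1 P2 j" using Suc by simp
    then show ?thesis by (metis Theta.simps(2) dvd_trans gcd_dvd1)
  qed simp
qed

lemma sqfree_zero:
  assumes "eval2 (sqfree_part R) x y = 0" shows "eval2 R x (y::'b::field_char_0) = 0"
proof -
  interpret e: comm_ring_hom "\<lambda>p. eval2 p x y" by (rule eval2_hom)
  have "(\<Prod>q\<in>prime_factors R. eval2 q x y) = 0" using assms by (simp add: sqfree_part_def e.hom_prod)
  then obtain q where "q \<in> prime_factors R" "eval2 q x y = 0" by (subst (asm) prod_zero_iff) auto
  then show ?thesis using ev_dvd_zero in_prime_factors_imp_dvd by blast
qed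

lemma Delta_mult: "1 \<le> i \<Longrightarrow> Theta P1 P2 (i - 1) = Delta P1 P2 i * Theta P1 P2 i"
  unfolding Delta_def using Theta_dvd[of "i - 1" i P1 P2] by simp

lemma Delta_nz: "1 \<le> i \<Longrightarrow> Delta P1 P2 i \<noteq> 0"
  using Delta_mult[of i P1 P2] Theta_nz[of P1 P2 "i - 1"] by auto

lemma low_vanish:
  assumes i: "1 \<le> i" and D: "eval2 (Delta P1 P2 i) x y = 0" and j: "j < i"
  shows "eval2 (sres_coeff P1 P2 j j) x (y::'b::field_char_0) = 0"
proof -
  have "eval2 (Theta P1 P2 (i - 1)) x y = 0"
    using D Delta_mult[OF i, of P1 P2] ev_dvd_zero by (metis dvd_triv_left)
  moreover have "j \<le> i - 1" using j by simp
  ultimately have T: "eval2 (Theta P1 P2 j) x y = 0" using ev_dvd_zero[OF Theta_dvd] by blast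
  show ?thesis
  proof (cases j)
    case 0
    then show ?thesis using T sqfree_zero by simp
  next
    case (Suc j')
    then show ?thesis using T ev_dvd_zero[OF gcd_dvd2] by simp
  qed
qed

lemma LC:
  fixes P :: "rat poly poly poly"
  assumes P0: "P \<noteq> 0" and td: "degree P = total_degree3 P"
  shows "\<exists>c. c \<noteq> 0 \<and> lead_coeff P = [:[:c:]:]"
proof -
  define S where "S = {i + j + k | i j k. coeff (coeff (coeff P k) j) i \<noteq> 0}"
  define B1 where "B1 = Max ((\<lambda>k. degree (coeff P k)) ` {..degree P})"
  define B2 where "B2 = Max ((\<lambda>(k,j). degree (coeff (coeff P k) j)) ` ({..degree P} \<times> {..B1}))"
  have bound: "m \<le> B2 + B1 + degree P" if "m \<in> S" for m
  proof -
    have "m \<in> {i + j + k | i j k. coeff (coeff (coeff P k) j) i \<noteq> 0}" using that S_def by simp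
    then obtain i j k where m: "m = i + j + k" and nz: "coeff (coeff (coeff P k) j) i \<noteq> 0" by blast
    have k: "k \<le> degree P" using nz by (metis coeff_0 le_degree zero_poly.rep_eq)
    have j: "j \<le> degree (coeff P k)" using nz by (metis coeff_0 le_degree zero_poly.rep_eq)
    have i: "i \<le> degree (coeff (coeff P k) j)" using nz by (metis le_degree)
    have j1: "j \<le> B1" using j k unfolding B1_def by (meson Max_ge atMost_iff finite_atMost finite_imageI image_eqI order.trans)
    have "degree (coeff (coeff P k) j) \<le> B2" unfolding B2_def
      by (rule Max_ge) (use k j1 in auto)
    then show ?thesis using m i j1 k by linarith
  qed
  have finS: "finite S" by (rule finite_subset[of _ "{..B2 + B1 + degree P}"]) (use bound in auto)
  have le: "m \<le> degree P" if "m \<in> S" for m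
    using td Max_ge[of "insert 0 S" m] finS that unfolding total_degree3_def S_def by auto
  define L where "L = lead_coeff P"
  have L0: "L \<noteq> 0" using P0 L_def by simp
  have dL: "degree L = 0"
  proof (rule ccontr)
    assume "degree L \<noteq> 0"
    have "coeff L (degree L) \<noteq> 0" using L0 by simp
    then have "coeff (coeff L (degree L)) (degree (coeff L (degree L))) \<noteq> 0" by simp
    then have "degree (coeff L (degree L)) + degree L + degree P \<in> S" unfolding S_def L_def by blast
    then show False using le \<open>degree L \<noteq> 0\<close> by fastforce
  qed
  define L0' where "L0' = coeff L 0"
  have L0'0: "L0' \<noteq> 0" using L0 dL L0'_def by (metis leading_coeff_0_iff)
  have dL0: "degree L0' = 0"
  proof (rule ccontr)
    assume "degree L0' \<noteq> 0"
    have "coeff L0' (degree L0') \<noteq> 0" using L0'0 by simp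
    then have "degree L0' + 0 + degree P \<in> S" unfolding S_def L0'_def L_def by blast
    then show False using le \<open>degree L0' \<noteq> 0\<close> by fastforce
  qed
  have "L = [:L0':]" using dL L0'_def by (metis degree_eq_zeroE coeff_pCons_0)
  moreover have "L0' = [:coeff L0' 0:]" using dL0 by (metis degree_eq_zeroE coeff_pCons_0)
  moreover have "coeff L0' 0 \<noteq> 0" using L0'0 dL0 by (metis leading_coeff_0_iff)
  ultimately show ?thesis unfolding L_def by metis
qed

lemma coeff_lin_pow: "coeff ([:-z,1:]^(Suc n)) n = - of_nat (Suc n) * (z::complex)"
proof (induct n)
  case 0 then show ?case by simp
next
  case (Suc n)
  have "[:-z,1:]^(Suc (Suc n)) = Polynomial.smult (-z) ([:-z,1:]^(Suc n)) + pCons 0 ([:-z,1:]^(Suc n))"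
    by (simp add: mult_pCons_left)
  then have "coeff ([:-z,1:]^(Suc (Suc n))) (Suc n) = -z * coeff ([:-z,1:]^(Suc n)) (Suc n) + coeff ([:-z,1:]^(Suc n)) n"
    by simp
  also have "\<dots> = - z + (- of_nat (Suc n) * z)" using Suc by (simp only: coeff_linear_power) simp
  finally show ?case by (simp add: algebra_simps)
qed

lemma ROOTPOW:
  fixes G :: "complex poly"
  assumes lc: "lead_coeff G = 1" and roots: "\<And>z. poly G z = 0 \<Longrightarrow> z = z0"
  shows "G = [:-z0,1:]^degree G"
proof -
  have G0: "G \<noteq> 0" using lc by auto
  define m where "m = order z0 G"
  obtain r where r: "G = [:-z0,1:]^m * r" and nd: "\<not> [:-z0,1:] dvd r"
    using order_decomp[OF G0] unfolding m_def by blast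
  have "degree r = 0"
  proof (rule ccontr)
    assume "degree r \<noteq> 0"
    then obtain z where z: "poly r z = 0" using complex_root_exists by blast
    then have "poly G z = 0" using r by simp
    then have "z = z0" by (rule roots)
    then show False using z nd by (simp add: dvd_iff_poly_eq_0)
  qed
  then obtain e where e: "r = [:e:]" by (metis degree_eq_zeroE)
  have "lead_coeff G = e" using r e by (simp add: lead_coeff_mult lead_coeff_power)
  then have e1: "e = 1" using lc by simp
  then have "G = [:-z0,1:]^m" using r e by simp
  moreover then have "degree G = m" by (metis degree_linear_power)
  ultimately show ?thesis by simp
qed

lemma map_poly_single: "f 0 = 0 \<Longrightarrow> map_poly f [:a:] = [:f a:]"
  by (rule poly_eqI) (simp add: coeff_map_poly coeff_pCons split: nat.split)

lemma eval2_const: "eval2 [:[:c:]:] x y = (of_rat c :: 'b::field_char_0)"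
  by (simp add: eval2_def map_poly_single)

lemma eval3_of_real: "eval3 P (of_real x) (of_real y) (of_real z) = (of_real (eval3 P x y z) :: complex)"
proof -
  have "of_real (eval3 P x y z) = poly (map_poly of_real (map_poly (\<lambda>c. eval2 c x y) P)) (of_real z :: complex)"
    unfolding eval3_def by (rule of_real_hom.poly_map_poly[symmetric])
  also have "map_poly of_real (map_poly (\<lambda>c. eval2 c x y) P) = map_poly (\<lambda>c. eval2 c (of_real x) (of_real y) :: complex) P"
    by (subst map_poly_map_poly) (auto simp: o_def eval2_of_real)
  finally show ?thesis unfolding eval3_def by simp
qed

lemma mp_smult: assumes "comm_ring_hom h" shows "map_poly h (Polynomial.smult c p) = Polynomial.smult (h c) (map_poly h p)"
proof -
  interpret e: comm_ring_hom h by (rule assms)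
  show ?thesis by (rule poly_eqI) (simp add: coeff_map_poly e.hom_mult)
qed

lemma mp_lin: assumes "comm_ring_hom h" shows "map_poly h [:a, b:] = [:h a, h b:]"
proof -
  interpret e: comm_ring_hom h by (rule assms)
  show ?thesis by (rule poly_eqI) (simp add: coeff_map_poly coeff_pCons split: nat.split)
qed

lemma poly_dvd_zero: "p dvd q \<Longrightarrow> poly p z = 0 \<Longrightarrow> poly q z = 0"
  by (elim dvdE) simp

lemma Srp_root:
  fixes p q :: "complex poly"
  assumes iq: "i \<le> degree q" and qp: "degree q < degree p" and rp: "poly p z = 0" and rq: "poly q z = 0"
  shows "poly (Srp p q i) z = 0"
  unfolding Sr_combo[OF iq qp] poly_sum
  by (rule sum.neutral) (auto simp: Rrow_def rp rq)

theorem proposition4: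
  fixes P1 P2 :: "rat poly poly poly" and i :: nat and \<alpha> \<beta> \<gamma> :: real
  assumes "gcd P1 P2 = 1"
    and "degree P1 = total_degree3 P1" and "degree P2 = total_degree3 P2"
    and "degree P1 > degree P2" and "degree P2 \<ge> 1"
    and "pseudo_generic P1 P2"
    and "1 \<le> i" and "i \<le> degree P2"
    and "(\<alpha>, \<beta>, \<gamma>) \<in> curveR P1 P2"
    and "eval2 (Delta P1 P2 i) \<alpha> \<beta> = 0"
    and "eval2 (sres_coeff P1 P2 i i) \<alpha> \<beta> \<noteq> 0"
  shows "\<gamma> = - eval2 (sres_coeff P1 P2 i (i - 1)) \<alpha> \<beta> / (of_nat i * eval2 (sres_coeff P1 P2 i i) \<alpha> \<beta>)"

proof -
  let ?p = "degree P1" and ?q = "degree P2"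
  have P10: "P1 \<noteq> 0" using assms(4) by auto
  have P20: "P2 \<noteq> 0" using assms(5) by auto
  obtain c1 where c1: "c1 \<noteq> 0" "lead_coeff P1 = [:[:c1:]:]" using LC[OF P10 assms(2)] by blast
  obtain c2 where c2: "c2 \<noteq> 0" "lead_coeff P2 = [:[:c2:]:]" using LC[OF P20 assms(3)] by blast
  have hom: "comm_ring_hom (\<lambda>c. eval2 c x (y::complex))" for x y by (rule eval2_hom)
  have dP1: "degree (map_poly (\<lambda>c. eval2 c x y) P1) = ?p" for x y :: complex
    by (rule map_poly_degree_eq) (simp add: c1 eval2_const)
  have dP2: "degree (map_poly (\<lambda>c. eval2 c x y) P2) = ?q" for x y :: complex
    by (rule map_poly_degree_eq) (simp add: c2 eval2_const)
  define si where "si = sres_coeff P1 P2 i i"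
  define si' where "si' = sres_coeff P1 P2 i (i - 1)"
  define W where "W = Polynomial.smult ((of_nat i * si)^i) (Srp P1 P2 i) - Polynomial.smult si ([:si', of_nat i * si:]^i)"
  have mapW: "map_poly (\<lambda>c. eval2 c x y) W =
     Polynomial.smult ((of_nat i * sres_coeff (map_poly (\<lambda>c. eval2 c x y) P1) (map_poly (\<lambda>c. eval2 c x y) P2) i i)^i)
        (Srp (map_poly (\<lambda>c. eval2 c x y) P1) (map_poly (\<lambda>c. eval2 c x y) P2) i)
   - Polynomial.smult (sres_coeff (map_poly (\<lambda>c. eval2 c x y) P1) (map_poly (\<lambda>c. eval2 c x y) P2) i i)
       ([:sres_coeff (map_poly (\<lambda>c. eval2 c x y) P1) (map_poly (\<lambda>c. eval2 c x y) P2) i (i - 1),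
          of_nat i * sres_coeff (map_poly (\<lambda>c. eval2 c x y) P1) (map_poly (\<lambda>c. eval2 c x y) P2) i i:]^i)"
    for x y :: complex
  proof -
    interpret e: comm_ring_hom "\<lambda>c. eval2 c x y" by (rule hom)
    interpret m: map_poly_comm_ring_hom "\<lambda>c. eval2 c x y" ..
    show ?thesis unfolding W_def si_def si'_def
      by (simp add: m.hom_minus mp_smult[OF hom] m.hom_power mp_lin[OF hom] e.hom_mult
          e.hom_power e.hom_of_nat Srp_hom[OF hom dP1 dP2] sres_hom[OF hom dP1 dP2])
  qed
  obtain F where F: "finite F" and PG0: "\<forall>(x, y) \<in> (\<lambda>(x, y, z). (x, y)) ` curveC P1 P2 - F.
            \<exists>!z. (x, y, z) \<in> curveC P1 P2"
    using assms(6) unfolding pseudo_generic_def by blast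
  have PG: "\<exists>!z. (x, y, z) \<in> curveC P1 P2" if "(x, y) \<in> (\<lambda>(x, y, z). (x, y)) ` curveC P1 P2 - F" for x y
    using bspec[OF PG0 that] by simp
  have keyB: "map_poly (\<lambda>c. eval2 c b1 b2) W = 0"
    if bD: "eval2 (Delta P1 P2 i) b1 b2 = (0::complex)" and bs: "eval2 si b1 b2 \<noteq> 0" and bF: "(b1, b2) \<notin> F" for b1 b2
  proof -
    define p where "p = map_poly (\<lambda>c. eval2 c b1 b2) P1"
    define q where "q = map_poly (\<lambda>c. eval2 c b1 b2) P2"
    have dp: "degree p = ?p" and dq: "degree q = ?q" unfolding p_def q_def using dP1 dP2 by auto
    have p0: "p \<noteq> 0" using dp assms(4) by auto
    have q0: "q \<noteq> 0" using dq assms(5) by auto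
    have qp: "degree q < degree p" using dp dq assms(4) by simp
    have iq: "i \<le> degree q" using dq assms(8) by simp
    have low: "sres_coeff p q j j = 0" if "j < i" for j
      using low_vanish[OF assms(7) bD that] sres_hom[OF hom dP1 dP2] unfolding p_def q_def by simp
    have sne: "sres_coeff p q i i \<noteq> 0" using bs sres_hom[OF hom dP1 dP2] unfolding p_def q_def si_def by simp
    define s where "s = sres_coeff p q i i"
    define s' where "s' = sres_coeff p q i (i - 1)"
    define G where "G = gcd p q"
    have SM: "degree G = i" "Srp p q i = Polynomial.smult s G"
      using SUB_MAIN[OF p0 q0 qp iq low sne] unfolding G_def s_def by auto
    obtain z0 where z0: "poly G z0 = 0" using complex_root_exists[of G] SM(1) assms(7) by auto
    have inC: "(b1, b2, z) \<in> curveC P1 P2" if "poly G z = 0" for z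
    proof -
      have "poly p z = 0" using poly_dvd_zero[OF _ that] G_def by simp
      moreover have "poly q z = 0" using poly_dvd_zero[OF _ that] G_def by simp
      ultimately show ?thesis unfolding curveC_def eval3_def p_def q_def by simp
    qed
    have "(b1, b2) \<in> (\<lambda>(x, y, z). (x, y)) ` curveC P1 P2 - F"
      using inC[OF z0] bF by force
    then have uniq: "\<exists>!z. (b1, b2, z) \<in> curveC P1 P2" by (rule PG)
    have allz: "z = z0" if "poly G z = 0" for z
      using uniq inC[OF that] inC[OF z0] by blast
    have lcG: "lead_coeff G = 1" unfolding G_def by (rule lead_coeff_gcd_field[OF p0])
    have Gp: "G = [:-z0,1:]^i" using ROOTPOW[OF lcG allz] SM(1) by simp
    have i1: "i = Suc (i - 1)" using assms(7) by simp
    have "s' = coeff (Srp p q i) (i - 1)" unfolding s'_def by (simp add: coeff_Srp)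
    also have "\<dots> = s * coeff ([:-z0,1:]^(Suc (i - 1))) (i - 1)" using SM(2) Gp i1 by simp
    also have "\<dots> = s * (- of_nat i * z0)" using coeff_lin_pow[of z0 "i - 1"] i1 by simp
    finally have s'eq: "s' = s * (- of_nat i * z0)" .
    have lin: "[:s', of_nat i * s:] = Polynomial.smult (of_nat i * s) [:-z0,1:]"
      using s'eq by (simp add: algebra_simps)
    have e1: "(Polynomial.smult (of_nat i * s) [:-z0,1:])^i = Polynomial.smult ((of_nat i * s)^i) ([:-z0,1:]^i)"
      by (rule smult_power)
    show ?thesis
      unfolding mapW p_def[symmetric] q_def[symmetric] s_def[symmetric] s'_def[symmetric] lin SM(2) Gp e1
      by (simp only: smult_smult, simp add: mult.commute)
  qed
  define a1 where "a1 = (of_real \<alpha> :: complex)"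
  define a2 where "a2 = (of_real \<beta> :: complex)"
  define g' where "g' = (of_real \<gamma> :: complex)"
  have aD: "eval2 (Delta P1 P2 i) a1 a2 = 0" unfolding a1_def a2_def eval2_of_real using assms(10) by simp
  have as: "eval2 si a1 a2 = of_real (eval2 si \<alpha> \<beta>)" unfolding a1_def a2_def eval2_of_real ..
  have as': "eval2 si' a1 a2 = of_real (eval2 si' \<alpha> \<beta>)" unfolding a1_def a2_def eval2_of_real ..
  have as0: "eval2 si a1 a2 \<noteq> 0" unfolding as using assms(11) si_def by simp
  have keyC: "eval2 (coeff W k) a1 a2 = 0" for k
  proof (rule ccontr)
    assume ne: "eval2 (coeff W k) a1 a2 \<noteq> 0"
    define f :: "complex poly poly" where "f = map_poly (map_poly of_rat) (Delta P1 P2 i)"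
    define K :: "complex poly poly" where "K = map_poly (map_poly of_rat) (coeff W k * si)"
    interpret ea: comm_ring_hom "\<lambda>c. eval2 c a1 a2" by (rule hom)
    have fa: "evC f a1 a2 = 0" unfolding f_def eval2_evC[symmetric] by (rule aD)
    have Ka: "evC K a1 a2 \<noteq> 0" unfolding K_def eval2_evC[symmetric] using ne as0 by (simp add: ea.hom_mult)
    have inj1: "\<forall>c::rat poly. map_poly (of_rat :: rat \<Rightarrow> complex) c = 0 \<longrightarrow> c = 0"
      using map_poly_zero[of "of_rat :: rat \<Rightarrow> complex"] by simp
    have f0: "f \<noteq> 0" unfolding f_def using Delta_nz[OF assms(7), of P1 P2] map_poly_zero[OF inj1] by simp
    have inf: "infinite {(x, y). evC f x y = 0 \<and> evC K x y \<noteq> 0}" by (rule GEO[OF f0 fa Ka])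
    then have "infinite ({(x, y). evC f x y = 0 \<and> evC K x y \<noteq> 0} - F)" using F by (rule Diff_infinite_finite[rotated])
    then have "{(x, y). evC f x y = 0 \<and> evC K x y \<noteq> 0} - F \<noteq> {}" by (rule infinite_imp_nonempty)
    then obtain bb where bb: "bb \<in> {(x, y). evC f x y = 0 \<and> evC K x y \<noteq> 0} - F" by blast
    obtain b1 b2 where bbe: "bb = (b1, b2)" by (cases bb)
    have b: "(b1, b2) \<in> {(x, y). evC f x y = 0 \<and> evC K x y \<noteq> 0} - F" using bb bbe by simp
    interpret eb: comm_ring_hom "\<lambda>c. eval2 c b1 b2" by (rule hom)
    have bD: "eval2 (Delta P1 P2 i) b1 b2 = 0" using b unfolding f_def eval2_evC[symmetric] by simp
    have bK: "eval2 (coeff W k) b1 b2 * eval2 si b1 b2 \<noteq> 0"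
      using b unfolding K_def eval2_evC[symmetric] by (simp add: eb.hom_mult)
    have bs: "eval2 si b1 b2 \<noteq> 0" using bK by simp
    have bF: "(b1, b2) \<notin> F" using b by simp
    have "map_poly (\<lambda>c. eval2 c b1 b2) W = 0" by (rule keyB[OF bD bs bF])
    then have "coeff (map_poly (\<lambda>c. eval2 c b1 b2) W) k = 0" by simp
    then have "eval2 (coeff W k) b1 b2 = 0" by (simp add: coeff_map_poly)
    then show False using bK by simp
  qed
  have e0: "eval2 0 a1 a2 = 0" by (simp add: eval2_def)
  have Wa: "map_poly (\<lambda>c. eval2 c a1 a2) W = 0"
  proof (rule poly_eqI)
    fix n
    have "coeff (map_poly (\<lambda>c. eval2 c a1 a2) W) n = eval2 (coeff W n) a1 a2"
      by (rule coeff_map_poly) (rule e0)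
    then show "coeff (map_poly (\<lambda>c. eval2 c a1 a2) W) n = coeff 0 n" using keyC by simp
  qed
  define p where "p = map_poly (\<lambda>c. eval2 c a1 a2) P1"
  define q where "q = map_poly (\<lambda>c. eval2 c a1 a2) P2"
  have dp: "degree p = ?p" and dq: "degree q = ?q" unfolding p_def q_def using dP1 dP2 by auto
  have qp: "degree q < degree p" using dp dq assms(4) by simp
  have iq: "i \<le> degree q" using dq assms(8) by simp
  have rp: "poly p g' = 0" and rq: "poly q g' = 0"
    using assms(9) eval3_of_real[of P1 \<alpha> \<beta> \<gamma>] eval3_of_real[of P2 \<alpha> \<beta> \<gamma>]
    unfolding p_def q_def a1_def a2_def g'_def curveR_def eval3_def[symmetric] by auto
  have Sr0: "poly (Srp p q i) g' = 0" by (rule Srp_root[OF iq qp rp rq])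
  define s where "s = sres_coeff p q i i"
  define s' where "s' = sres_coeff p q i (i - 1)"
  have ss: "s = eval2 si a1 a2" "s' = eval2 si' a1 a2"
    unfolding s_def s'_def p_def q_def si_def si'_def using sres_hom[OF hom dP1 dP2] by auto
  have "poly (map_poly (\<lambda>c. eval2 c a1 a2) W) g' = 0" using Wa by simp
  then have "s * (s' + g' * (of_nat i * s))^i = 0"
    unfolding mapW p_def[symmetric] q_def[symmetric] s_def[symmetric] s'_def[symmetric]
    by (simp add: Sr0 poly_power)
  then have "s' + g' * (of_nat i * s) = 0" using as0 ss by simp
  then have h1: "g' * (of_nat i * s) = - s'" by (simp add: eq_neg_iff_add_eq_0 add.commute)
  have nz: "of_nat i * s \<noteq> 0" using as0 ss assms(7) by simp
  have "g' = (g' * (of_nat i * s)) / (of_nat i * s)" using nz by simp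
  also have "\<dots> = - s' / (of_nat i * s)" by (simp only: h1)
  finally have "g' = - s' / (of_nat i * s)" .
  then have "of_real \<gamma> = (of_real (- eval2 si' \<alpha> \<beta> / (of_nat i * eval2 si \<alpha> \<beta>)) :: complex)"
    unfolding g'_def ss as as' by simp
  then show ?thesis unfolding si_def si'_def of_real_eq_iff .
qed

end
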